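(* Assume ${\tt m}_{-2}<\infty$. Fix $\ell\in\mathbb{N}$ and let $\varphi$ be a positive function, slowly varying at $\infty$, such that $\int_{[0,1]}y^{-2}\varphi(y^{-1})\Lambda(dy)<\infty$. Define $(a_n)_{n\in\mathbb{N}}$ by $a_1=\dots=a_\ell=0$ and $$a_n=p_{n,\ell}\,\varphi(n)+\sum_{k=1}^{n-1}p_{n,k}\,a_{n-k},\qquad n>\ell.$$ Then the sequence $(a_n)$ is bounded.
   Context: $\Lambda$ is a finite nonzero measure on $[0,1]$ without atoms at $0$ and $1$; ${\tt m}_{-2}:=\int_{[0,1]}x^{-2}\Lambda(dx)$. For $2\le k\le m$, $\lambda_{m,k}=\int_{[0,1]}x^{k}(1-x)^{m-k}x^{-2}\Lambda(dx)$, and $\lambda_n:=\sum_{k=2}^n\binom nk\lambda_{n,k}=\int_{[0,1]}x^{-2}(1-nx(1-x)^{n-1}-(1-x)^n)\Lambda(dx)$. For $1\le k<n$, $p_{n,k}:=\binom{n}{k+1}\lambda_{n,k+1}/\lambda_n$ (the probability that the first collision of the $\Lambda$-coalescent on $n$ blocks merges $k+1$ blocks). *)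

theory Defs
  imports "HOL-Analysis.Analysis"
begin

text \<open>Lambda-coalescent rates. The measure Lambda is a measure on the reals
  (Borel sets) concentrated on [0,1].\<close>

definition lam :: "real measure \<Rightarrow> nat \<Rightarrow> nat \<Rightarrow> real" where
  "lam \<Lambda> m k = (\<integral>x. x ^ k * (1 - x) ^ (m - k) / x ^ 2 \<partial>\<Lambda>)"

definition lam_total :: "real measure \<Rightarrow> nat \<Rightarrow> real" where
  "lam_total \<Lambda> n = (\<Sum>k=2..n. real (n choose k) * lam \<Lambda> n k)"

definition p_coal :: "real measure \<Rightarrow> nat \<Rightarrow> nat \<Rightarrow> real" where
  "p_coal \<Lambda> n k = real (n choose (k + 1)) * lam \<Lambda> n (k + 1) / lam_total \<Lambda> n"

definition slowly_varying :: "(real \<Rightarrow> real) \<Rightarrow> bool" where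
  "slowly_varying \<phi> \<longleftrightarrow>
     (\<forall>x>0. \<phi> x > 0) \<and> \<phi> \<in> borel_measurable borel \<and>
     (\<forall>c>0. ((\<lambda>x. \<phi> (c * x) / \<phi> x) \<longlongrightarrow> 1) at_top)"

end

theory Submission
  imports Defs
begin


lemma sv_good_ev:
  assumes sv: "slowly_varying \<phi>" and s: "s > 0"
  shows "\<forall>\<^sub>F x in at_top. \<phi> (s*x) \<le> 7/5 * \<phi> x \<and> \<phi> x \<le> 7/5 * \<phi> (s*x)"
proof -
  have pos: "\<And>x. x > 0 \<Longrightarrow> \<phi> x > 0" using sv unfolding slowly_varying_def by auto
  have lim: "((\<lambda>x. \<phi> (s * x) / \<phi> x) \<longlongrightarrow> 1) at_top" using sv s unfolding slowly_varying_def by auto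
  have e1: "\<forall>\<^sub>F x in at_top. \<phi> (s * x) / \<phi> x < 7/5" by (rule order_tendstoD(2)[OF lim]) simp
  have e2: "\<forall>\<^sub>F x in at_top. 5/7 < \<phi> (s * x) / \<phi> x" by (rule order_tendstoD(1)[OF lim]) simp
  have e3: "\<forall>\<^sub>F x in at_top. (x::real) > 0" by (rule eventually_gt_at_top)
  show ?thesis using e1 e2 e3
  proof eventually_elim
    case (elim x)
    have px: "\<phi> x > 0" using pos elim by auto
    have psx: "\<phi> (s*x) > 0" using pos elim s by auto
    from elim px psx show ?case by (auto simp: field_simps)
  qed
qed


definition good :: "(real \<Rightarrow> real) \<Rightarrow> real \<Rightarrow> real \<Rightarrow> bool" where
  "good \<phi> x s \<longleftrightarrow> \<phi> (s*x) \<le> 7/5 * \<phi> x \<and> \<phi> x \<le> 7/5 * \<phi> (s*x)"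

lemma bad_measure_tendsto:
  assumes sv: "slowly_varying \<phi>" and xs: "filterlim xs at_top sequentially"
  shows "(\<lambda>n. measure lborel ({1..4} \<inter> {s. \<not> good \<phi> (xs n) s})) \<longlonglongrightarrow> 0"
proof -
  have [measurable]: "\<phi> \<in> borel_measurable borel" using sv unfolding slowly_varying_def by auto
  define f where "f n = (indicator ({1..4} \<inter> {s. \<not> good \<phi> (xs n) s}) :: real \<Rightarrow> real)" for n
  have meas: "{1..4} \<inter> {s. \<not> good \<phi> (xs n) s} \<in> sets lborel" for n
    unfolding good_def by measurable
  define g where "g = (\<lambda>_::real. 0::real)"
  have "(\<lambda>n. integral\<^sup>L lborel (f n)) \<longlonglongrightarrow> integral\<^sup>L lborel g"
  proof (rule integral_dominated_convergence[where w="indicator {1..4::real}"])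
    show "g \<in> borel_measurable lborel" by (simp add: g_def)
    show "f n \<in> borel_measurable lborel" for n unfolding f_def using meas by simp
    show "integrable lborel (indicator {1..4} :: real \<Rightarrow> real)" by simp
    show "AE x in lborel. norm (f n x) \<le> indicator {1..4} x" for n
      unfolding f_def by (auto simp: indicator_def)
    show "AE x in lborel. (\<lambda>n. f n x) \<longlonglongrightarrow> g x"
    proof (rule AE_I2)
      fix x :: real
      show "(\<lambda>n. f n x) \<longlonglongrightarrow> g x"
      proof (cases "x \<in> {1..4}")
        case True
        then have "x > 0" by auto
        from eventually_compose_filterlim[OF sv_good_ev[OF sv this] xs]
        have "\<forall>\<^sub>F n in sequentially. f n x = 0"
          by eventually_elim (auto simp: f_def good_def indicator_def)
        then show ?thesis unfolding g_def by (rule tendsto_eventually)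
      next
        case False
        then show ?thesis by (auto simp add: f_def g_def indicator_def)
      qed
    qed
  qed
  then show ?thesis using meas by (simp add: f_def g_def)
qed
lemma uct:
  assumes sv: "slowly_varying \<phi>"
  shows "\<exists>X>0. \<forall>x\<ge>X. \<forall>t\<in>{1..2}. \<phi> (t*x) \<le> 2 * \<phi> x \<and> \<phi> x \<le> 2 * \<phi> (t*x)"
proof (rule ccontr)
  have pos: "\<And>x. x > 0 \<Longrightarrow> \<phi> x > 0" using sv unfolding slowly_varying_def by auto
  have [measurable]: "\<phi> \<in> borel_measurable borel" using sv unfolding slowly_varying_def by auto
  assume neg: "\<not> ?thesis"
  have "\<forall>n::nat. \<exists>x. x \<ge> real n + 1 \<and> (\<exists>t. t \<in> {1..2} \<and> \<not>(\<phi> (t*x) \<le> 2 * \<phi> x \<and> \<phi> x \<le> 2 * \<phi> (t*x)))"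
  proof
    fix n :: nat
    have "real n + 1 > 0" by simp
    with neg obtain x where "x \<ge> real n + 1" "\<exists>t\<in>{1..2}. \<not>(\<phi> (t*x) \<le> 2 * \<phi> x \<and> \<phi> x \<le> 2 * \<phi> (t*x))"
      by blast
    then show "\<exists>x. x \<ge> real n + 1 \<and> (\<exists>t. t \<in> {1..2} \<and> \<not>(\<phi> (t*x) \<le> 2 * \<phi> x \<and> \<phi> x \<le> 2 * \<phi> (t*x)))"
      by blast
  qed
  then obtain xs ts where H: "\<And>n. xs n \<ge> real n + 1 \<and> ts n \<in> {1..2} \<and> \<not>(\<phi> (ts n * xs n) \<le> 2 * \<phi> (xs n) \<and> \<phi> (xs n) \<le> 2 * \<phi> (ts n * xs n))"
    by metis
  define ys where "ys n = ts n * xs n" for n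
  have ys_ge: "ys n \<ge> xs n" for n
  proof -
    have "xs n \<ge> 0" using H[of n] by (smt (verit) of_nat_0_le_iff)
    moreover have "ts n \<ge> 1" using H[of n] by auto
    ultimately show ?thesis unfolding ys_def using mult_right_mono[of 1 "ts n" "xs n"] by simp
  qed
  have xs_lim: "filterlim xs at_top sequentially"
    by (rule filterlim_at_top_mono[OF filterlim_real_sequentially]) (use H in \<open>auto intro!: always_eventually\<close>, smt (verit) H)
  have ys_lim: "filterlim ys at_top sequentially"
    by (rule filterlim_at_top_mono[OF xs_lim]) (use ys_ge in auto)
  have e1: "\<forall>\<^sub>F n in sequentially. measure lborel ({1..4} \<inter> {s. \<not> good \<phi> (xs n) s}) < 1/2"
    by (rule order_tendstoD(2)[OF bad_measure_tendsto[OF sv xs_lim]]) simp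
  have e2: "\<forall>\<^sub>F n in sequentially. measure lborel ({1..4} \<inter> {s. \<not> good \<phi> (ys n) s}) < 1/2"
    by (rule order_tendstoD(2)[OF bad_measure_tendsto[OF sv ys_lim]]) simp
  from eventually_happens'[OF _ eventually_conj[OF e1 e2]] obtain n where
    mU: "measure lborel ({1..4} \<inter> {s. \<not> good \<phi> (xs n) s}) < 1/2" and
    mV: "measure lborel ({1..4} \<inter> {s. \<not> good \<phi> (ys n) s}) < 1/2" by auto
  define x where "x = xs n"
  define t where "t = ts n"
  define y where "y = ys n"
  define U where "U = {1..4} \<inter> {s. \<not> good \<phi> x s}"
  define V where "V = {1..4} \<inter> {s. \<not> good \<phi> y s}"
  have t12: "t \<in> {1..2}" using H[of n] by (simp add: t_def)
  have xpos: "x > 0" using H[of n] unfolding x_def by (smt (verit) of_nat_0_le_iff)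
  have yxt: "y = t * x" by (simp add: y_def ys_def t_def x_def)
  have viol: "\<not>(\<phi> y \<le> 2 * \<phi> x \<and> \<phi> x \<le> 2 * \<phi> y)" using H[of n] by (simp add: yxt t_def x_def)
  have Um: "U \<in> sets lborel" unfolding U_def good_def by measurable
  have Vm: "V \<in> sets lborel" unfolding V_def good_def by measurable
  have pw: "(indicator {2..4} s :: real) \<le> indicator U s + indicator V (0 + (1/t) * s)" for s :: real
  proof (cases "s \<in> {2..4} \<and> s \<notin> U \<and> s/t \<notin> V")
    case True
    then have s24: "s \<in> {2..4}" and sU: "s \<notin> U" and sV: "s/t \<notin> V" by auto
    have st: "s/t \<in> {1..4}" using s24 t12 by (auto simp: field_simps)
    have g1: "good \<phi> x s" using sU s24 unfolding U_def by auto
    have g2: "good \<phi> y (s/t)" using sV st unfolding V_def by auto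
    have eq: "(s/t) * y = s * x" using t12 by (simp add: yxt)
    have px: "\<phi> x > 0" using pos xpos by auto
    have py: "\<phi> y > 0" using pos xpos t12 yxt by auto
    have psx: "\<phi> (s*x) > 0" using pos xpos s24 by auto
    from g1 g2 have "\<phi> (s*x) \<le> 7/5 * \<phi> x" "\<phi> x \<le> 7/5 * \<phi> (s*x)"
        "\<phi> (s*x) \<le> 7/5 * \<phi> y" "\<phi> y \<le> 7/5 * \<phi> (s*x)"
      unfolding good_def eq by auto
    with px py psx viol have False by linarith
    then show ?thesis by simp
  next
    case False
    have "0 + (1/t) * s = s/t" by simp
    with False show ?thesis by (auto simp: indicator_def)
  qed
  have iU: "integrable lborel (indicator U :: real \<Rightarrow> real)"
  proof (rule integrable_real_indicator[OF Um])
    have "emeasure lborel U \<le> emeasure lborel {1..4::real}" unfolding U_def by (rule emeasure_mono) auto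
    then show "emeasure lborel U < \<infinity>" by (simp add: le_less_trans)
  qed
  have iV: "integrable lborel (indicator V :: real \<Rightarrow> real)"
  proof (rule integrable_real_indicator[OF Vm])
    have "emeasure lborel V \<le> emeasure lborel {1..4::real}" unfolding V_def by (rule emeasure_mono) auto
    then show "emeasure lborel V < \<infinity>" by (simp add: le_less_trans)
  qed
  have iV': "integrable lborel (\<lambda>s. indicator V (0 + (1/t) * s) :: real)"
    using lborel_integrable_real_affine[OF iV, of "1/t" 0] t12 by auto
  have "measure lborel {2..4::real} = integral\<^sup>L lborel (indicator {2..4::real} :: real \<Rightarrow> real)" by simp
  also have "\<dots> \<le> integral\<^sup>L lborel (\<lambda>s. indicator U s + indicator V (0 + (1/t) * s) :: real)"
    using pw iU iV' by (intro integral_mono) auto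
  also have "\<dots> = integral\<^sup>L lborel (indicator U :: real \<Rightarrow> real) + integral\<^sup>L lborel (\<lambda>s. indicator V (0 + (1/t) * s) :: real)"
    using iU iV' by simp
  also have "integral\<^sup>L lborel (\<lambda>s. indicator V (0 + (1/t) * s) :: real) = t * integral\<^sup>L lborel (indicator V :: real \<Rightarrow> real)"
    using lborel_integral_real_affine[of "1/t" "indicator V :: real \<Rightarrow> real" 0] t12 by auto
  finally have "measure lborel {2..4::real} \<le> measure lborel U + t * measure lborel V"
    using Um Vm by simp
  moreover have "measure lborel U < 1/2" using mU by (simp add: U_def x_def)
  moreover have "measure lborel V < 1/2" using mV by (simp add: V_def y_def)
  moreover have "measure lborel V \<ge> 0" by simp
  moreover have "t * measure lborel V \<le> 2 * measure lborel V" using t12 by (intro mult_right_mono) auto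
  ultimately show False by simp
qed


lemma potter:
  assumes sv: "slowly_varying \<phi>"
  shows "\<exists>X>0. \<forall>y\<ge>X. \<forall>z\<ge>X. \<phi> y \<le> 2 * max (y/z) (z/y) * \<phi> z"
proof -
  have pos: "\<And>x. x > 0 \<Longrightarrow> \<phi> x > 0" using sv unfolding slowly_varying_def by auto
  obtain X where X: "X > 0" and U: "\<And>x t. x \<ge> X \<Longrightarrow> t \<in> {1..2} \<Longrightarrow> \<phi> (t*x) \<le> 2 * \<phi> x \<and> \<phi> x \<le> 2 * \<phi> (t*x)"
    using uct[OF sv] by blast
  have R: "\<phi> (2^k * z) \<le> 2^k * \<phi> z \<and> \<phi> z \<le> 2^k * \<phi> (2^k * z)" if z: "z \<ge> X" for z k
  proof (induction k)
    case 0 then show ?case by simp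
  next
    case (Suc k)
    have "2^k * z \<ge> X" using z X by (smt (verit) mult_le_cancel_right1 one_le_power)
    from U[OF this, of 2] have "\<phi> (2^Suc k * z) \<le> 2 * \<phi> (2^k*z)" "\<phi> (2^k*z) \<le> 2 * \<phi> (2^Suc k * z)"
      by (auto simp: mult.assoc)
    note h = this
    have "2^k * \<phi> (2^k*z) \<le> 2^k * (2 * \<phi> (2^Suc k * z))"
      using h(2) by (intro mult_left_mono) auto
    with Suc.IH have "\<phi> z \<le> 2^k * (2 * \<phi> (2^Suc k * z))" by linarith
    then have h3: "\<phi> z \<le> 2^Suc k * \<phi> (2^Suc k * z)" by (metis mult.assoc mult.commute power_Suc)
    have h4: "\<phi> (2^Suc k * z) \<le> 2^Suc k * \<phi> z" using h(1) Suc.IH by simp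
    show ?case using h3 h4 by simp
  qed
  have C: "\<forall>y. z \<le> y \<and> y \<le> 2^n * z \<longrightarrow> \<phi> y \<le> 2 * (y/z) * \<phi> z \<and> \<phi> z \<le> 2 * (y/z) * \<phi> y"
    if z: "z \<ge> X" for z n
  proof (induction n)
    case 0
    have "z > 0" using z X by auto
    then show ?case using pos[of z] by auto
  next
    case (Suc n)
    show ?case
    proof (intro allI impI)
      fix y assume y: "z \<le> y \<and> y \<le> 2 ^ Suc n * z"
      show "\<phi> y \<le> 2 * (y/z) * \<phi> z \<and> \<phi> z \<le> 2 * (y/z) * \<phi> y"
      proof (cases "y \<le> 2^n * z")
        case True then show ?thesis using Suc y by blast
      next
        case False
        have zp: "z > 0" using z X by auto
        have xz: "2^n * z \<ge> X" using z X by (smt (verit) mult_le_cancel_right1 one_le_power)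
        define t where "t = y / (2^n * z)"
        have t12: "t \<in> {1..2}" using False y zp by (auto simp: t_def field_simps)
        have yt: "y = t * (2^n * z)" using zp by (simp add: t_def)
        have u: "\<phi> y \<le> 2 * \<phi> (2^n*z)" "\<phi> (2^n*z) \<le> 2 * \<phi> y"
          using U[OF xz t12] unfolding yt[symmetric] by auto
        have r: "\<phi> (2^n*z) \<le> 2^n * \<phi> z" "\<phi> z \<le> 2^n * \<phi> (2^n*z)" using R[OF z, of n] by auto
        have "2^n * \<phi> (2^n*z) \<le> 2^n * (2 * \<phi> y)" using u(2) by (intro mult_left_mono) auto
        with r have a2: "\<phi> z \<le> 2^n * (2 * \<phi> y)" by linarith
        from u r have a1: "\<phi> y \<le> 2 * (2^n * \<phi> z)" by linarith
        have n2: "2^n \<le> y / z" using False zp by (auto simp: field_simps)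
        have pz: "\<phi> z > 0" and py: "\<phi> y > 0" using pos zp y by auto
        have "2 * (2^n * \<phi> z) \<le> 2 * ((y/z) * \<phi> z)" using n2 pz by (intro mult_left_mono mult_right_mono) auto
        moreover have "2^n * (2 * \<phi> y) \<le> (y/z) * (2 * \<phi> y)" using n2 py by (intro mult_right_mono) auto
        ultimately show ?thesis using a1 a2 by (simp add: algebra_simps)
      qed
    qed
  qed
  have main: "\<phi> y \<le> 2 * (y/z) * \<phi> z \<and> \<phi> z \<le> 2 * (y/z) * \<phi> y" if "z \<ge> X" "y \<ge> z" for y z
  proof -
    have zp: "z > 0" using that X by auto
    obtain n where "y / z < 2^n" using real_arch_pow[of 2 "y/z"] by auto
    then have "y \<le> 2^n * z" using zp by (simp add: field_simps)
    then show ?thesis using C[OF that(1), of n] that by blast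
  qed
  show ?thesis
  proof (intro exI[of _ X] conjI allI impI X)
    fix y z assume y: "y \<ge> X" and z: "z \<ge> X"
    have yp: "y > 0" and zp: "z > 0" using y z X by auto
    show "\<phi> y \<le> 2 * max (y/z) (z/y) * \<phi> z"
    proof (cases "y \<ge> z")
      case True
      with main[OF z True] have "\<phi> y \<le> 2 * (y/z) * \<phi> z" by blast
      moreover have "2 * (y/z) * \<phi> z \<le> 2 * max (y/z) (z/y) * \<phi> z"
        using pos[OF zp] by (intro mult_right_mono) auto
      ultimately show ?thesis by linarith
    next
      case False
      with main[OF y] have "\<phi> y \<le> 2 * (z/y) * \<phi> z" by auto
      moreover have "2 * (z/y) * \<phi> z \<le> 2 * max (y/z) (z/y) * \<phi> z"
        using pos[OF zp] by (intro mult_right_mono) auto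
      ultimately show ?thesis by linarith
    qed
  qed
qed



lemma H1:
  fixes y :: real
  shows "(1-y) * (\<Sum>i<N. real ((i+Suc s) choose Suc s) * y^i) + real ((N+s) choose Suc s) * y^N
         = (\<Sum>i<N. real ((i+s) choose s) * y^i)"
proof (induction N)
  case 0 then show ?case by simp
next
  case (Suc N)
  have pas: "real ((Suc N + s) choose Suc s) = real ((N+s) choose s) + real ((N+s) choose Suc s)"
    by (simp add: binomial_Suc_Suc)
  have "(1-y) * (\<Sum>i<Suc N. real ((i+Suc s) choose Suc s) * y^i) + real ((Suc N+s) choose Suc s) * y^Suc N
      = ((1-y) * (\<Sum>i<N. real ((i+Suc s) choose Suc s) * y^i) + real ((N+s) choose Suc s) * y^N)
        + real ((N+s) choose s) * y^N
        + ((1-y) * real ((N + Suc s) choose Suc s) * y^N + real ((Suc N+s) choose Suc s) * y^Suc N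
           - real ((N+s) choose Suc s) * y^N - real ((N+s) choose s) * y^N)"
    by (simp add: algebra_simps)
  also have "(1-y) * real ((N + Suc s) choose Suc s) * y^N + real ((Suc N+s) choose Suc s) * y^Suc N
           - real ((N+s) choose Suc s) * y^N - real ((N+s) choose s) * y^N = 0"
  proof -
    have e: "N + Suc s = Suc N + s" by simp
    show ?thesis unfolding e pas by (simp add: algebra_simps)
  qed
  finally show ?case using Suc.IH by simp
qed

lemma H2:
  fixes y :: real
  assumes y: "0 \<le> y" "y < 1"
  shows "(\<Sum>i<N. real ((i+s) choose s) * y^i) \<le> 1 / (1-y)^Suc s"
  using y
proof (induction s arbitrary: N)
  case 0
  have "(1-y) * (\<Sum>i<N. y^i) = 1 - y^N" by (simp add: one_diff_power_eq)
  also have "\<dots> \<le> 1" using 0 by simp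
  finally show ?case using 0 by (simp add: field_simps)
next
  case (Suc s)
  have "(1-y) * (\<Sum>i<N. real ((i+Suc s) choose Suc s) * y^i) \<le> (\<Sum>i<N. real ((i+s) choose s) * y^i)"
  proof -
    have "0 \<le> real ((N+s) choose Suc s) * y^N" using Suc.prems by simp
    with H1[where y=y and N=N and s=s] show ?thesis by linarith
  qed
  also have "\<dots> \<le> 1 / (1-y)^Suc s" using Suc by blast
  finally have "(1-y) * (\<Sum>i<N. real ((i+Suc s) choose Suc s) * y^i) \<le> 1 / (1-y)^Suc s" .
  then have "(\<Sum>i<N. real ((i+Suc s) choose Suc s) * y^i) \<le> (1 / (1-y)^Suc s) / (1-y)"
    using Suc.prems by (subst pos_le_divide_eq) (auto simp: mult.commute)
  also have "\<dots> = 1 / (1-y)^Suc (Suc s)" by (simp add: power_Suc2)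
  finally show ?case .
qed

lemma H3: "real j ^ s \<le> fact s * real ((j+s) choose s)"
proof (induction s)
  case 0 then show ?case by simp
next
  case (Suc s)
  have e: "real (Suc s) * real ((j + Suc s) choose Suc s) = real (Suc (j+s)) * real ((j+s) choose s)"
  proof -
    have "Suc s * (Suc (j+s) choose Suc s) = Suc (j+s) * ((j+s) choose s)" by (rule Suc_times_binomial)
    then show ?thesis by (metis add_Suc_right of_nat_mult)
  qed
  have "real j ^ Suc s = real j * real j ^ s" by simp
  also have "\<dots> \<le> real (Suc (j+s)) * (fact s * real ((j+s) choose s))"
    using Suc.IH by (intro mult_mono) auto
  also have "\<dots> = fact s * (real (Suc s) * real ((j + Suc s) choose Suc s))" unfolding e by simp
  also have "\<dots> = fact (Suc s) * real ((j + Suc s) choose Suc s)" by (simp add: fact_Suc)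
  finally show ?case .
qed

lemma H:
  fixes y :: real
  assumes y: "0 \<le> y" "y < 1"
  shows "(\<Sum>i<N. real i ^ s * y^i) \<le> fact s / (1-y)^Suc s"
proof -
  have "(\<Sum>i<N. real i ^ s * y^i) \<le> (\<Sum>i<N. fact s * (real ((i+s) choose s) * y^i))"
    using H3 y by (intro sum_mono) (simp add: mult.assoc[symmetric] mult_right_mono)
  also have "\<dots> = fact s * (\<Sum>i<N. real ((i+s) choose s) * y^i)" by (simp add: sum_distrib_left)
  also have "\<dots> \<le> fact s * (1 / (1-y)^Suc s)" using H2[OF y] by (intro mult_left_mono) auto
  finally show ?thesis by simp
qed


lemma L_shift:
  fixes g :: "nat \<Rightarrow> real"
  assumes g: "\<And>j. g j \<ge> 0"
  shows "(\<Sum>i<N. g (i - r)) \<le> real r * g 0 + (\<Sum>j<N. g j)"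
proof -
  have "(\<Sum>i<N. g (i - r)) \<le> (\<Sum>i<N+r. g (i - r))"
    by (rule sum_mono2) (auto simp: g)
  also have "\<dots> = (\<Sum>i\<in>{0..<r}. g (i - r)) + (\<Sum>i\<in>{r..<N+r}. g (i - r))"
    using sum.atLeastLessThan_concat[of 0 r "N+r" "\<lambda>i. g (i - r)"] by (simp add: atLeast0LessThan)
  also have "(\<Sum>i\<in>{0..<r}. g (i - r)) = real r * g 0" by simp
  also have "(\<Sum>i\<in>{r..<N+r}. g (i - r)) = (\<Sum>j\<in>{0..<N}. g j)"
    using sum.shift_bounds_nat_ivl[of "\<lambda>i. g (i - r)" 0 r N] by simp
  finally show ?thesis by (simp add: atLeast0LessThan)
qed

definition CL :: "nat \<Rightarrow> nat \<Rightarrow> real" where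
  "CL s r = 2*real r*(2*real r)^s + 2^s * real r + 2^s * fact s"

lemma L:
  fixes y :: real
  assumes y: "0 \<le> y" "y < 1"
  shows "(\<Sum>i<N. real i ^ s * y^(i-r)) \<le> CL s r / (1-y)^Suc s"
proof -
  have tm: "real i ^ s * y^(i-r) \<le> (if i < 2*r then (2*real r)^s else 0) + 2^s * (real (i-r) ^ s * y^(i-r))" for i
  proof (cases "i < 2*r")
    case True
    have "real i ^ s * y^(i-r) \<le> (2*real r)^s * 1"
      using True y by (intro mult_mono power_mono power_le_one) auto
    moreover have "0 \<le> 2^s * (real (i-r) ^ s * y^(i-r))" using y by simp
    ultimately show ?thesis using True by simp
  next
    case False
    have "real i \<le> 2 * real (i - r)" using False by auto
    then have "real i ^ s \<le> (2 * real (i-r))^s" by (intro power_mono) auto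
    then have "real i ^ s * y^(i-r) \<le> (2 * real (i-r))^s * y^(i-r)" using y by (intro mult_right_mono) auto
    also have "(2 * real (i-r))^s * y^(i-r) = 2^s * (real (i-r) ^ s * y^(i-r))"
      by (simp only: power_mult_distrib mult.assoc)
    finally show ?thesis using False by simp
  qed
  have "(\<Sum>i<N. real i ^ s * y^(i-r)) \<le> (\<Sum>i<N. (if i < 2*r then (2*real r)^s else 0)) + 2^s * (\<Sum>i<N. real (i-r) ^ s * y^(i-r))"
    using sum_mono[where K="{..<N}", OF tm] by (simp add: sum.distrib sum_distrib_left)
  also have "(\<Sum>i<N. (if i < 2*r then (2*real r)^s else 0)) \<le> 2*real r*(2*real r)^s"
  proof -
    have "(\<Sum>i<N. (if i < 2*r then (2*real r)^s else 0)) \<le> (\<Sum>i<2*r. (2*real r)^s)"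
    proof -
      have "(\<Sum>i<N. (if i < 2*r then (2*real r)^s else 0)) = (\<Sum>i\<in>{..<N}\<inter>{..<2*r}. (2*real r)^s)"
        by (subst sum.inter_restrict) (auto simp: indicator_def intro!: sum.cong)
      also have "\<dots> \<le> (\<Sum>i<2*r. (2*real r)^s)" by (rule sum_mono2) auto
      finally show ?thesis .
    qed
    then show ?thesis by simp
  qed
  also have "(\<Sum>i<N. real (i-r) ^ s * y^(i-r)) \<le> real r * (real 0 ^ s * y^0) + (\<Sum>j<N. real j ^ s * y^j)"
    by (rule L_shift[where g="\<lambda>j. real j ^ s * y^j"]) (use y in simp)
  also have "real r * (real 0 ^ s * y^0) \<le> real r" by (cases s) auto
  also have "(\<Sum>j<N. real j ^ s * y^j) \<le> fact s / (1-y)^Suc s" by (rule H[OF y])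
  finally have A: "(\<Sum>i<N. real i ^ s * y^(i-r)) \<le> 2*real r*(2*real r)^s + 2^s * (real r + fact s / (1-y)^Suc s)"
    by simp
  have p: "0 < (1-y)^Suc s" "(1-y)^Suc s \<le> 1" using y by (simp, intro power_le_one) auto
  have "2*real r*(2*real r)^s + 2^s * real r \<le> (2*real r*(2*real r)^s + 2^s * real r) / (1-y)^Suc s"
  proof -
    have "0 \<le> 2*real r*(2*real r)^s + 2^s * real r" by simp
    then have "(2*real r*(2*real r)^s + 2^s * real r) * (1-y)^Suc s \<le> (2*real r*(2*real r)^s + 2^s * real r) * 1"
      using p by (intro mult_left_mono) auto
    then show ?thesis using p by (subst le_divide_eq) auto
  qed
  with A show ?thesis unfolding CL_def by (simp add: add_divide_distrib algebra_simps)
qed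



lemma Phi_facts:
  assumes pos: "\<And>x. x > 0 \<Longrightarrow> \<phi> x > 0" and i: "i \<ge> 1"
  shows "Max ((\<lambda>n. \<phi> (real n)) ` {i..2*i}) \<ge> 0"
    and "\<And>n. n \<in> {i..2*i} \<Longrightarrow> \<phi> (real n) \<le> Max ((\<lambda>n. \<phi> (real n)) ` {i..2*i})"
    and "\<And>c. (\<And>n. n \<in> {i..2*i} \<Longrightarrow> \<phi> (real n) \<le> c) \<Longrightarrow> Max ((\<lambda>n. \<phi> (real n)) ` {i..2*i}) \<le> c"
proof -
  show "\<And>n. n \<in> {i..2*i} \<Longrightarrow> \<phi> (real n) \<le> Max ((\<lambda>n. \<phi> (real n)) ` {i..2*i})"
    by (rule Max_ge) auto
  then have "\<phi> (real i) \<le> Max ((\<lambda>n. \<phi> (real n)) ` {i..2*i})" by auto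
  moreover have "\<phi> (real i) > 0" using pos i by auto
  ultimately show "Max ((\<lambda>n. \<phi> (real n)) ` {i..2*i}) \<ge> 0" by (meson less_imp_le order_trans)
  show "\<And>c. (\<And>n. n \<in> {i..2*i} \<Longrightarrow> \<phi> (real n) \<le> c) \<Longrightarrow> Max ((\<lambda>n. \<phi> (real n)) ` {i..2*i}) \<le> c"
    by (subst Max_le_iff) auto
qed


lemma claim_mt:
  fixes t x :: real and i r :: nat
  assumes t: "t = real i * x" "t > 0" and x: "x > 0" and r: "r \<ge> 2"
  shows "max t (1/t) * t^r / real i \<le> x * real i ^ 0 + x^(r+1) * real i ^ r"
proof -
  have i: "real i > 0" using t by (cases "i = 0") auto
  show ?thesis
  proof (cases "t \<ge> 1")
    case True
    then have h: "1/t \<le> 1" by simp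
    have "max t (1/t) = t" using True h by (intro max_absorb1) linarith
    then have "max t (1/t) * t^r / real i = x^(r+1) * real i ^ r"
      using i unfolding t by (simp add: field_simps power_mult_distrib)
    moreover have "0 \<le> x * real i ^ 0" using x by simp
    ultimately show ?thesis by linarith
  next
    case False
    then have "1/t > 1" using t by (simp add: less_divide_eq)
    then have m: "max t (1/t) = 1/t" using False by (simp add: max_def)
    have rr: "r = Suc (r-1)" using r by arith
    have tr: "t^r = t * t^(r-1)" by (subst rr) simp
    have tn: "t \<noteq> 0" using t(2) by simp
    have e: "max t (1/t) * t^r / real i = t^(r-1) / real i" unfolding m tr using tn by simp
    have "t^(r-1) \<le> t^1" using False t r by (intro power_decreasing) auto
    then have "t^(r-1) / real i \<le> t / real i" using i by (simp add: divide_right_mono)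
    also have "t / real i = x" using i t by simp
    finally have "max t (1/t) * t^r / real i \<le> x" unfolding e .
    moreover have "0 \<le> x^(r+1) * real i ^ r" using x by simp
    ultimately show ?thesis by simp
  qed
qed


lemma G_bound:
  fixes \<phi> :: "real \<Rightarrow> real" and X :: real and r :: nat
  assumes pos: "\<And>x. x > 0 \<Longrightarrow> \<phi> x > 0"
    and pot: "\<And>y z. y \<ge> X \<Longrightarrow> z \<ge> X \<Longrightarrow> \<phi> y \<le> 2 * max (y/z) (z/y) * \<phi> z"
    and X2: "X \<ge> 2" and r2: "r \<ge> 2"
  shows "\<exists>A B. \<forall>x N. 0 < x \<longrightarrow> x \<le> 1 \<longrightarrow>
     (\<Sum>i<N. Max ((\<lambda>n. \<phi> (real n)) ` {i..2*i}) / real i * (2*real i*x)^r * (1-x)^(i-r)) \<le> A * \<phi> (1/x) + B"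
proof -
  define \<Phi> where "\<Phi> i = Max ((\<lambda>n. \<phi> (real n)) ` {i..2*i})" for i
  define T where "T i x = \<Phi> i / real i * (2*real i*x)^r * (1-x)^(i-r)" for i x
  define N1 where "N1 = nat \<lceil>X\<rceil>"
  define M0 where "M0 = Max ((\<lambda>n. \<phi> (real n)) ` {1..2*N1})"
  have N1X: "X \<le> real N1" unfolding N1_def by linarith
  have N1pos: "N1 \<ge> 1" using N1X X2 by simp
  have M0ge: "\<phi> (real n) \<le> M0" if "n \<in> {1..2*N1}" for n
    unfolding M0_def using that by (intro Max_ge) auto
  have M0pos: "M0 \<ge> 0"
  proof -
    have "\<phi> (real 1) \<le> M0" using N1pos by (intro M0ge) auto
    moreover have "\<phi> (real 1) > 0" using pos by simp
    ultimately show ?thesis by linarith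
  qed
  have phiX: "\<phi> X > 0" using pos X2 by simp
  have Phi0: "\<Phi> i \<ge> 0" if "i \<ge> 1" for i unfolding \<Phi>_def using Phi_facts(1)[OF pos that] .
  have PhiM0: "\<Phi> i \<le> M0" if "i \<ge> 1" "real i < X" for i
    unfolding \<Phi>_def
  proof (rule Phi_facts(3)[OF pos that(1)])
    fix n assume n: "n \<in> {i..2*i}"
    have "real i \<le> real N1" using that N1X by linarith
    then have "i \<le> N1" by simp
    then show "\<phi> (real n) \<le> M0" using n that by (intro M0ge) auto
  qed
  define B0 where "B0 = M0 + 4 * \<phi> X"
  have B0pos: "B0 \<ge> 0" using M0pos phiX by (simp add: B0_def)
  have PhiB0: "\<Phi> i \<le> B0 * real i" if i: "i \<ge> 1" for i
  proof (cases "real i < X")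
    case True
    have "\<Phi> i \<le> M0" using PhiM0[OF i True] .
    also have "\<dots> \<le> M0 * real i" using M0pos i by (simp add: mult_le_cancel_left1)
    also have "\<dots> \<le> B0 * real i" using phiX by (intro mult_right_mono) (auto simp: B0_def)
    finally show ?thesis .
  next
    case False
    show ?thesis unfolding \<Phi>_def
    proof (rule Phi_facts(3)[OF pos i])
      fix n assume n: "n \<in> {i..2*i}"
      have nX: "real n \<ge> X" using n False by auto
      have "\<phi> (real n) \<le> 2 * max (real n / X) (X / real n) * \<phi> X" using pot[OF nX order_refl] .
      also have "max (real n / X) (X / real n) \<le> real n"
      proof -
        have "real n / X \<le> real n" using X2 by (simp add: divide_le_eq mult_le_cancel_left1)
        moreover have "X / real n \<le> 1" using nX X2 by (simp add: divide_le_eq)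
        moreover have "1 \<le> real n" using nX X2 by simp
        ultimately show ?thesis by linarith
      qed
      then have "2 * max (real n / X) (X / real n) * \<phi> X \<le> 2 * real n * \<phi> X" using phiX by simp
      also have "\<dots> \<le> 4 * real i * \<phi> X" using n phiX by simp
      also have "\<dots> \<le> B0 * real i" unfolding B0_def using M0pos i by (simp add: algebra_simps)
      finally show "\<phi> (real n) \<le> B0 * real i" by simp
    qed
  qed
  have PhiA: "\<Phi> i \<le> 4 * max (real i * x) (1/(real i * x)) * \<phi> (1/x)"
    if iX: "real i \<ge> X" and x: "0 < x" "1/x \<ge> X" for i x
  proof -
    have i: "i \<ge> 1" using iX X2 by simp
    show ?thesis unfolding \<Phi>_def
    proof (rule Phi_facts(3)[OF pos i])
      fix n assume n: "n \<in> {i..2*i}"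
      have nX: "real n \<ge> X" using n iX by auto
      have ip: "real i > 0" using i by simp
      have "\<phi> (real n) \<le> 2 * max (real n / (1/x)) ((1/x) / real n) * \<phi> (1/x)" using pot[OF nX x(2)] .
      also have "max (real n / (1/x)) ((1/x) / real n) \<le> 2 * max (real i * x) (1/(real i * x))"
      proof -
        have "real n / (1/x) \<le> 2 * (real i * x)" using n x by (simp add: field_simps)
        moreover have "(1/x) / real n \<le> 1/(real i * x)" using n x ip by (simp add: field_simps)
        moreover have "0 \<le> 1/(real i * x)" using x ip by simp
        moreover have "real i * x \<le> max (real i * x) (1/(real i * x))" "1/(real i * x) \<le> max (real i * x) (1/(real i * x))" by auto
        ultimately show ?thesis by (intro max.boundedI) argo+
      qed
      then have "2 * max (real n / (1/x)) ((1/x) / real n) * \<phi> (1/x) \<le> 2 * (2 * max (real i * x) (1/(real i * x))) * \<phi> (1/x)"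
        using pos[of "1/x"] x by (intro mult_right_mono mult_left_mono) auto
      finally show "\<phi> (real n) \<le> 4 * max (real i * x) (1/(real i * x)) * \<phi> (1/x)" by simp
    qed
  qed
  have T0: "T 0 x = 0" for x by (simp add: T_def)
  have TA: "T i x \<le> (if real i < X then M0*2^r else 0) + 2^(r+2) * \<phi> (1/x) * (x * (real i^0 * (1-x)^(i-r)) + x^(r+1) * (real i^r * (1-x)^(i-r)))"
    if x: "0 < x" "x \<le> 1/X" for i x
  proof -
    have x1: "x \<le> 1" using x X2 by (smt (verit) divide_le_eq_1_pos)
    have ox: "1/x \<ge> X" using x X2 by (simp add: field_simps)
    have P: "0 \<le> (1-x)^(i-r)" "(1-x)^(i-r) \<le> 1" using x1 x by (auto intro: power_le_one)
    have px: "\<phi> (1/x) > 0" using pos x by simp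
    have R2: "0 \<le> 2^(r+2) * \<phi> (1/x) * (x * (real i^0 * (1-x)^(i-r)) + x^(r+1) * (real i^r * (1-x)^(i-r)))"
      using px P x by simp
    show ?thesis
    proof (cases "i = 0")
      case True then show ?thesis using R2 M0pos by (simp add: T_def)
    next
      case False
      then have i: "i \<ge> 1" by simp
      show ?thesis
      proof (cases "real i < X")
        case True
        have ix: "real i * x \<le> 1"
        proof -
          have "real i * x \<le> X * x" using True x by (intro mult_right_mono) auto
          also have "\<dots> \<le> 1" using x X2 by (simp add: field_simps)
          finally show ?thesis .
        qed
        have "T i x = \<Phi> i * (1 / real i) * (2^r * (real i * x)^r) * (1-x)^(i-r)"
          by (simp add: T_def power_mult_distrib mult.assoc)
        also have "\<dots> \<le> M0 * 1 * (2^r * 1) * 1"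
          using PhiM0[OF i True] Phi0[OF i] i P ix x x1 M0pos
          by (intro mult_mono power_le_one) (auto simp: divide_le_eq)
        finally have "T i x \<le> M0 * 2^r" by simp
        then show ?thesis using R2 by (simp only: True if_True)
      next
        case False
        have iX: "real i \<ge> X" using False by simp
        define t where "t = real i * x"
        have tp: "t > 0" using i x by (simp add: t_def)
        have cl: "max t (1/t) * t^r / real i \<le> x * real i ^ 0 + x^(r+1) * real i ^ r"
          by (rule claim_mt[OF t_def tp x(1) r2])
        have "T i x = \<Phi> i * (2^r * (1-x)^(i-r)) * (t^r / real i)"
          by (simp add: T_def t_def power_mult_distrib)
        also have "\<dots> \<le> (4 * max t (1/t) * \<phi> (1/x)) * (2^r * (1-x)^(i-r)) * (t^r / real i)"
          using PhiA[OF iX x(1) ox] P tp unfolding t_def by (intro mult_right_mono) auto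
        also have "\<dots> = 2^(r+2) * \<phi> (1/x) * (1-x)^(i-r) * (max t (1/t) * t^r / real i)"
          by (simp add: power_add)
        also have "\<dots> \<le> 2^(r+2) * \<phi> (1/x) * (1-x)^(i-r) * (x * real i ^ 0 + x^(r+1) * real i ^ r)"
          using cl px P by (intro mult_left_mono) auto
        also have "\<dots> = 2^(r+2) * \<phi> (1/x) * (x * (real i^0 * (1-x)^(i-r)) + x^(r+1) * (real i^r * (1-x)^(i-r)))"
          by (simp add: algebra_simps)
        finally show ?thesis using False by simp
      qed
    qed
  qed
  have TB: "T i x \<le> B0 * 2^r * x^r * (real i^r * (1-x)^(i-r))" if x: "0 < x" "x \<le> 1" for i x
  proof (cases "i = 0")
    case True then show ?thesis using x B0pos by (simp add: T_def)
  next
    case False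
    then have i: "i \<ge> 1" by simp
    have P: "0 \<le> (1-x)^(i-r)" using x by simp
    have "T i x = (\<Phi> i / real i) * (2^r * x^r * (real i^r * (1-x)^(i-r)))"
      by (simp add: T_def power_mult_distrib algebra_simps)
    also have "\<dots> \<le> B0 * (2^r * x^r * (real i^r * (1-x)^(i-r)))"
      using PhiB0[OF i] i P x by (intro mult_right_mono) (auto simp: divide_le_eq mult.commute)
    finally show ?thesis by (simp add: mult.assoc)
  qed
  define A where "A = 2^(r+2) * (CL 0 r + CL r r)"
  define B where "B = real N1 * M0 * 2^r + B0 * 2^r * CL r r * X"
  have CLpos: "CL s r \<ge> 0" for s unfolding CL_def by simp
  have key: "(\<Sum>i<N. Max ((\<lambda>n. \<phi> (real n)) ` {i..2*i}) / real i * (2*real i*x)^r * (1-x)^(i-r)) \<le> A * \<phi> (1/x) + B"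
    if x: "0 < x" "x \<le> 1" for x :: real and N :: nat
  proof -
    have y: "0 \<le> 1 - x" "1 - x < 1" using x by auto
    have px: "\<phi> (1/x) > 0" using pos x by simp
    have LA: "(\<Sum>i<N. real i ^ s * (1-x)^(i-r)) \<le> CL s r / x^Suc s" for s
      using L[OF y, where N=N and s=s and r=r] by simp
    have sumT: "(\<Sum>i<N. \<Phi> i / real i * (2*real i*x)^r * (1-x)^(i-r)) = (\<Sum>i<N. T i x)"
      by (simp add: T_def)
    have Bge: "B \<ge> real N1 * M0 * 2^r" "B \<ge> B0 * 2^r * CL r r * X"
      unfolding B_def using M0pos B0pos CLpos X2 by auto
    have Age: "A * \<phi> (1/x) \<ge> 0" unfolding A_def using CLpos px by simp
    have main: "(\<Sum>i<N. T i x) \<le> A * \<phi> (1/x) + B"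
    proof (cases "x \<le> 1/X")
      case True
      have "(\<Sum>i<N. T i x) \<le> (\<Sum>i<N. (if real i < X then M0*2^r else 0) + 2^(r+2) * \<phi> (1/x) * (x * (real i^0 * (1-x)^(i-r)) + x^(r+1) * (real i^r * (1-x)^(i-r))))"
        using TA[OF x(1) True] by (intro sum_mono) auto
      also have "\<dots> = (\<Sum>i<N. (if real i < X then M0*2^r else 0)) + 2^(r+2) * \<phi> (1/x) * (x * (\<Sum>i<N. real i^0 * (1-x)^(i-r)) + x^(r+1) * (\<Sum>i<N. real i^r * (1-x)^(i-r)))"
        by (simp add: sum.distrib sum_distrib_left distrib_left)
      also have "(\<Sum>i<N. (if real i < X then M0*2^r else 0)) \<le> real N1 * M0 * 2^r"
      proof -
        have "(\<Sum>i<N. (if real i < X then M0*2^r else 0)) = (\<Sum>i\<in>{..<N}\<inter>{i. real i < X}. M0*2^r)"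
          by (subst sum.inter_restrict) (auto simp: indicator_def intro!: sum.cong)
        also have "\<dots> \<le> (\<Sum>i\<in>{..<N1}. M0*2^r)"
        proof (rule sum_mono2)
          show "{..<N} \<inter> {i. real i < X} \<subseteq> {..<N1}" using N1X by auto
        qed (use M0pos in auto)
        finally show ?thesis by simp
      qed
      also have "x * (\<Sum>i<N. real i^0 * (1-x)^(i-r)) \<le> CL 0 r"
        using LA[of 0] x by (simp add: field_simps)
      also have "x^(r+1) * (\<Sum>i<N. real i^r * (1-x)^(i-r)) \<le> CL r r"
      proof -
        have "x^(r+1) * (\<Sum>i<N. real i^r * (1-x)^(i-r)) \<le> x^(r+1) * (CL r r / x^Suc r)"
          using LA[of r] x by (intro mult_left_mono) auto
        also have "\<dots> = CL r r" using x by simp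
        finally show ?thesis .
      qed
      finally have "(\<Sum>i<N. T i x) \<le> real N1 * M0 * 2^r + 2^(r+2) * \<phi> (1/x) * (CL 0 r + CL r r)"
        using px by (simp add: mult_left_mono)
      then show "(\<Sum>i<N. T i x) \<le> A * \<phi> (1/x) + B" using Bge unfolding A_def by (simp add: algebra_simps)
    next
      case False
      have "(\<Sum>i<N. T i x) \<le> (\<Sum>i<N. B0 * 2^r * x^r * (real i^r * (1-x)^(i-r)))"
        using TB[OF x] by (intro sum_mono) auto
      also have "\<dots> = B0 * 2^r * x^r * (\<Sum>i<N. real i^r * (1-x)^(i-r))" by (simp add: sum_distrib_left)
      also have "\<dots> \<le> B0 * 2^r * x^r * (CL r r / x^Suc r)"
        using LA[of r] x B0pos by (intro mult_left_mono) auto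
      also have "\<dots> = B0 * 2^r * CL r r * (1/x)" using x by (simp add: field_simps)
      also have "\<dots> \<le> B0 * 2^r * CL r r * X"
      proof -
        have "1/x \<le> X" using False x X2 by (simp add: field_simps)
        then show ?thesis using B0pos CLpos by (intro mult_left_mono) auto
      qed
      finally show "(\<Sum>i<N. T i x) \<le> A * \<phi> (1/x) + B" using Bge Age by linarith
    qed
    then show ?thesis using sumT unfolding \<Phi>_def by simp
  qed
  show ?thesis using key by blast
qed



lemma F_total:
  fixes x :: real
  shows "(\<Sum>j\<le>n. Bernstein n j x * ((real j - 1) * (real n + 1 - real j)))
       = (real n + 1) * real n * x - real n * (real n - 1) * x^2 - (real n + 1)"
proof -
  have "(\<Sum>j\<le>n. Bernstein n j x * ((real j - 1) * (real n + 1 - real j)))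
      = (\<Sum>j\<le>n. (real n + 1) * (real j * Bernstein n j x) - real j * (real j - 1) * Bernstein n j x - (real n + 1) * Bernstein n j x)"
    by (intro sum.cong) (auto simp: algebra_simps)
  also have "\<dots> = (real n + 1) * (\<Sum>j\<le>n. real j * Bernstein n j x) - (\<Sum>j\<le>n. real j * (real j - 1) * Bernstein n j x) - (real n + 1) * (\<Sum>j\<le>n. Bernstein n j x)"
    by (simp only: sum_subtractf sum_distrib_left)
  also have "\<dots> = (real n + 1) * real n * x - real n * (real n - 1) * x^2 - (real n + 1)"
    by simp
  finally show ?thesis .
qed

lemma F_reindex:
  fixes x :: real
  assumes n: "n \<ge> 2"
  shows "(\<Sum>k\<in>{1..n-1}. real (n choose (k+1)) * x^(k+1) * (1-x)^(n-(k+1)) * real k * real (n-k))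
       = (\<Sum>j\<in>{2..n}. Bernstein n j x * ((real j - 1) * (real n + 1 - real j)))"
proof -
  have "(\<Sum>j\<in>{2..n}. Bernstein n j x * ((real j - 1) * (real n + 1 - real j)))
     = (\<Sum>j\<in>{Suc 1..Suc (n-1)}. Bernstein n j x * ((real j - 1) * (real n + 1 - real j)))"
    using n by (simp add: Suc_diff_1 numeral_2_eq_2)
  also have "\<dots> = (\<Sum>k\<in>{1..n-1}. Bernstein n (Suc k) x * ((real (Suc k) - 1) * (real n + 1 - real (Suc k))))"
    by (rule sum.shift_bounds_cl_Suc_ivl)
  also have "\<dots> = (\<Sum>k\<in>{1..n-1}. real (n choose (k+1)) * x^(k+1) * (1-x)^(n-(k+1)) * real k * real (n-k))"
    by (intro sum.cong) (auto simp: Bernstein_def of_nat_diff)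
  finally show ?thesis by simp
qed

lemma F_lower:
  fixes x :: real
  assumes n: "n \<ge> 2" and x: "0 \<le> x" "x \<le> 1"
  shows "(\<Sum>k\<in>{1..n-1}. real (n choose (k+1)) * x^(k+1) * (1-x)^(n-(k+1)) * real k * real (n-k))
           \<ge> real n ^ 2 * (x - x^2) - (real n + 1)"
proof -
  have split: "{..n} = {0,1} \<union> {2..n}" using n by auto
  have "(\<Sum>j\<le>n. Bernstein n j x * ((real j - 1) * (real n + 1 - real j)))
      = Bernstein n 0 x * (- (real n + 1)) + (\<Sum>j\<in>{2..n}. Bernstein n j x * ((real j - 1) * (real n + 1 - real j)))"
    unfolding split by (subst sum.union_disjoint) auto
  moreover have "Bernstein n 0 x * (real n + 1) \<ge> 0" using Bernstein_nonneg[OF x] by simp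
  ultimately have "(\<Sum>j\<in>{2..n}. Bernstein n j x * ((real j - 1) * (real n + 1 - real j)))
     \<ge> (real n + 1) * real n * x - real n * (real n - 1) * x^2 - (real n + 1)"
    unfolding F_total by linarith
  moreover have "(real n + 1) * real n * x - real n * (real n - 1) * x^2 \<ge> real n ^ 2 * (x - x^2)"
  proof -
    have "(real n + 1) * real n * x - real n * (real n - 1) * x^2 = real n ^ 2 * (x - x^2) + real n * x + real n * x^2"
      by (simp add: algebra_simps power2_eq_square)
    moreover have "real n * x \<ge> 0" "real n * x^2 \<ge> 0" using x by auto
    ultimately show ?thesis by linarith
  qed
  ultimately show ?thesis unfolding F_reindex[OF n] by linarith
qed

lemma F_nonneg_terms:
  fixes x :: real
  assumes x: "0 \<le> x" "x \<le> 1" and k: "k \<in> {1..n-1}"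
  shows "0 \<le> real (n choose (k+1)) * x^(k+1) * (1-x)^(n-(k+1)) * real k * real (n-k)"
  using x by simp

lemma F_lower2:
  fixes x :: real
  assumes n: "n \<ge> 2" and x: "0 \<le> x" "x \<le> 1"
  shows "(\<Sum>k\<in>{1..n-1}. real (n choose (k+1)) * x^(k+1) * (1-x)^(n-(k+1)) * real k * real (n-k))
           \<ge> x^2 * (1-x)^(n-2)"
proof -
  define f where "f k = real (n choose (k+1)) * x^(k+1) * (1-x)^(n-(k+1)) * real k * real (n-k)" for k
  have "f 1 \<le> (\<Sum>k\<in>{1..n-1}. f k)"
    by (rule member_le_sum) (use n x in \<open>auto simp: f_def\<close>)
  moreover have "f 1 = real (n choose 2) * real (n - 1) * (x^2 * (1-x)^(n-2))"
    by (simp add: f_def numeral_2_eq_2 power2_eq_square)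
  moreover have c1: "real (n choose 2) * real (n - 1) \<ge> 1"
  proof -
    have "n choose 2 \<ge> 1" using n by (simp add: Suc_le_eq)
    moreover have "n - 1 \<ge> 1" using n by simp
    ultimately have "(n choose 2) * (n - 1) \<ge> 1" by (simp add: Suc_le_eq)
    then show ?thesis by (metis of_nat_1 of_nat_le_iff of_nat_mult)
  qed
  moreover have "x^2 * (1-x)^(n-2) \<ge> 0" using x by simp
  ultimately have "1 * (x^2 * (1-x)^(n-2)) \<le> (\<Sum>k\<in>{1..n-1}. f k)"
    using mult_right_mono[OF c1, of "x^2 * (1-x)^(n-2)"] by linarith
  then show ?thesis by (simp add: f_def)
qed



locale lset =
  fixes \<Lambda> :: "real measure"
  assumes sets_L: "sets \<Lambda> = sets borel"
    and fin: "finite_measure \<Lambda>"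
    and ae01: "AE x in \<Lambda>. 0 < x \<and> x \<le> 1"
begin

lemma space_L: "space \<Lambda> = UNIV"
  using sets_eq_imp_space_eq[OF sets_L] by simp

lemma meas_L: "f \<in> borel_measurable borel \<Longrightarrow> f \<in> borel_measurable \<Lambda>"
  by (subst measurable_cong_sets[OF sets_L refl])

lemma intb:
  fixes f :: "real \<Rightarrow> real"
  assumes f: "f \<in> borel_measurable borel" and b: "\<And>x. 0 < x \<Longrightarrow> x \<le> 1 \<Longrightarrow> \<bar>f x\<bar> \<le> C"
  shows "integrable \<Lambda> f"
proof (rule finite_measure.integrable_const_bound[OF fin, where B=C])
  show "AE x in \<Lambda>. norm (f x) \<le> C" using ae01 by eventually_elim (use b in auto)
  show "f \<in> borel_measurable \<Lambda>" using meas_L[OF f] .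
qed

lemma kern_bound:
  fixes x :: real
  assumes j: "j \<ge> 2" and x: "0 < x" "x \<le> 1"
  shows "0 \<le> x^j * (1-x)^(n-j) / x^2" "x^j * (1-x)^(n-j) / x^2 \<le> 1"
proof -
  have e: "x^j * (1-x)^(n-j) / x^2 = x^(j-2) * (1-x)^(n-j)"
  proof -
    have "x^j = x^2 * x^(j-2)" using j by (metis le_add_diff_inverse power_add)
    then show ?thesis using x by simp
  qed
  show "0 \<le> x^j * (1-x)^(n-j) / x^2" using x by simp
  show "x^j * (1-x)^(n-j) / x^2 \<le> 1" unfolding e using x
    by (intro mult_le_one power_le_one) auto
qed

lemma kern_int: "j \<ge> 2 \<Longrightarrow> integrable \<Lambda> (\<lambda>x. x^j * (1-x)^(n-j) / x^2)"
  by (rule intb[where C=1]) (use kern_bound in auto)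

lemma lam_nonneg:
  assumes j: "j \<ge> 2" shows "lam \<Lambda> n j \<ge> 0"
proof -
  have "AE x in \<Lambda>. 0 \<le> x^j * (1-x)^(n-j) / x^2"
    using ae01 by eventually_elim (use kern_bound(1)[OF j] in auto)
  then show ?thesis unfolding lam_def by (rule integral_nonneg_AE)
qed


definition Fs :: "nat \<Rightarrow> real \<Rightarrow> real" where
  "Fs n x = (\<Sum>k\<in>{1..n-1}. real (n choose (k+1)) * x^(k+1) * (1-x)^(n-(k+1)) * real k * real (n-k))"

lemma Fs_nonneg: "0 \<le> x \<Longrightarrow> x \<le> 1 \<Longrightarrow> 0 \<le> Fs n x"
  unfolding Fs_def by (intro sum_nonneg) simp

lemma Fs_pointwise:
  fixes x \<delta> c0 :: real
  assumes \<delta>: "0 < \<delta>" "\<delta> \<le> 1/2" and n: "n \<ge> 2" and x: "0 < x" "x \<le> 1"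
    and c0: "c0 \<le> \<delta>/4" "c0 * real N0^2 \<le> \<delta>^N0" "c0 \<ge> 0" and N0: "real N0 * \<delta> \<ge> 8"
  shows "c0 * real n^2 * indicator {\<delta>..1-\<delta>} x \<le> Fs n x / x^2"
proof (cases "x \<in> {\<delta>..1-\<delta>}")
  case False
  then show ?thesis using Fs_nonneg[of x n] x by simp
next
  case True
  then have xd: "\<delta> \<le> x" "x \<le> 1 - \<delta>" by auto
  have Fpos: "0 \<le> Fs n x" using Fs_nonneg[of x n] x by simp
  have x2: "0 < x^2" "x^2 \<le> 1" using x by (auto intro: power_le_one)
  show ?thesis
  proof (cases "n \<ge> N0")
    case True
    have nd: "real n * \<delta> \<ge> 8"
      using N0 True \<delta> by (smt (verit) mult_right_mono of_nat_le_iff)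
    have xx: "x - x^2 \<ge> \<delta>/2"
    proof (cases "x \<le> 1/2")
      case True
      have "x * (1 - x) \<ge> \<delta> * (1/2)" using xd True \<delta> by (intro mult_mono) auto
      then show ?thesis by (simp add: power2_eq_square algebra_simps)
    next
      case False
      have "x * (1 - x) \<ge> (1/2) * \<delta>" using xd False \<delta> by (intro mult_mono) auto
      then show ?thesis by (simp add: power2_eq_square algebra_simps)
    qed
    have "Fs n x \<ge> real n^2 * (x - x^2) - (real n + 1)"
      unfolding Fs_def using F_lower[OF n, of x] x by simp
    moreover have "real n^2 * (x - x^2) \<ge> real n^2 * (\<delta>/2)"
      using xx by (intro mult_left_mono) auto
    moreover have "real n + 1 \<le> real n^2 * (\<delta>/4)"
    proof -
      have "real n + 1 \<le> 2 * real n" using n by simp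
      also have "\<dots> = real n * 8 / 4" by simp
      also have "\<dots> \<le> real n * (real n * \<delta>) / 4" using nd by (intro divide_right_mono mult_left_mono) auto
      also have "\<dots> = real n^2 * (\<delta>/4)" by (simp add: power2_eq_square)
      finally show ?thesis .
    qed
    ultimately have F1: "Fs n x \<ge> real n^2 * (\<delta>/4)" by (simp add: algebra_simps)
    have "c0 * real n^2 \<le> (\<delta>/4) * real n^2" using c0 by (intro mult_right_mono) auto
    also have "\<dots> \<le> Fs n x" using F1 by (simp add: mult.commute)
    also have "Fs n x \<le> Fs n x / x^2"
    proof -
      have "Fs n x * x^2 \<le> Fs n x * 1" using Fpos x2 by (intro mult_left_mono) auto
      then show ?thesis using x2 by (simp add: le_divide_eq)
    qed
    finally show ?thesis using True xd by simp
  next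
    case False
    have "Fs n x \<ge> x^2 * (1-x)^(n-2)" unfolding Fs_def using F_lower2[OF n, of x] x by simp
    then have F2: "Fs n x / x^2 \<ge> (1-x)^(n-2)" using x2 by (simp add: le_divide_eq mult.commute)
    have "c0 * real n^2 \<le> c0 * real N0^2" using False c0 by (intro mult_left_mono power_mono) auto
    also have "\<dots> \<le> \<delta>^N0" using c0 by simp
    also have "\<delta>^N0 \<le> \<delta>^(n-2)" using False \<delta> by (intro power_decreasing) auto
    also have "\<delta>^(n-2) \<le> (1-x)^(n-2)" using xd \<delta> by (intro power_mono) auto
    finally show ?thesis using F2 xd by simp
  qed
qed


lemma E_bound:
  assumes \<delta>: "0 < \<delta>" "\<delta> \<le> 1/2" and mpos: "measure \<Lambda> {\<delta>..1-\<delta>} > 0"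
  shows "\<exists>c>0. \<forall>n\<ge>2. (\<Sum>k\<in>{1..n-1}. real (n choose (k+1)) * lam \<Lambda> n (k+1) * (real k * real (n-k))) \<ge> c * real n^2"
proof -
  define N0 where "N0 = nat \<lceil>8/\<delta>\<rceil>"
  define c0 where "c0 = min (\<delta>/4) (\<delta>^N0 / real N0^2)"
  have N0: "real N0 * \<delta> \<ge> 8"
  proof -
    have "real N0 \<ge> 8/\<delta>" unfolding N0_def by linarith
    then show ?thesis using \<delta> by (simp add: divide_le_eq)
  qed
  have N0pos: "N0 > 0" using N0 by (cases N0) auto
  have c0pos: "c0 > 0" unfolding c0_def using \<delta> N0pos by simp
  have c0: "c0 \<le> \<delta>/4" "c0 * real N0^2 \<le> \<delta>^N0" "c0 \<ge> 0"
  proof -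
    show "c0 \<le> \<delta>/4" unfolding c0_def by (rule min.cobounded1)
    have "c0 \<le> \<delta>^N0 / real N0^2" unfolding c0_def by (rule min.cobounded2)
    then show "c0 * real N0^2 \<le> \<delta>^N0" using N0pos by (simp add: le_divide_eq)
    show "c0 \<ge> 0" using c0pos by simp
  qed
  define c where "c = c0 * measure \<Lambda> {\<delta>..1-\<delta>}"
  have cpos: "c > 0" unfolding c_def using c0pos mpos by simp
  have "\<forall>n\<ge>2. (\<Sum>k\<in>{1..n-1}. real (n choose (k+1)) * lam \<Lambda> n (k+1) * (real k * real (n-k))) \<ge> c * real n^2"
  proof (intro allI impI)
    fix n :: nat assume n: "n \<ge> 2"
    define G where "G x = (\<Sum>k\<in>{1..n-1}. real (n choose (k+1)) * (x^(k+1) * (1-x)^(n-(k+1)) / x^2) * (real k * real (n-k)))" for x :: real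
    have Gint: "integrable \<Lambda> G" unfolding G_def
      by (intro Bochner_Integration.integrable_sum integrable_mult_left integrable_mult_right kern_int) auto
    have "(\<Sum>k\<in>{1..n-1}. real (n choose (k+1)) * lam \<Lambda> n (k+1) * (real k * real (n-k)))
        = (\<Sum>k\<in>{1..n-1}. integral\<^sup>L \<Lambda> (\<lambda>x. real (n choose (k+1)) * (x^(k+1) * (1-x)^(n-(k+1)) / x^2) * (real k * real (n-k))))"
      unfolding lam_def by (intro sum.cong refl) (simp only: integral_mult_left_zero integral_mult_right_zero)
    also have "\<dots> = integral\<^sup>L \<Lambda> G" unfolding G_def
      by (rule Bochner_Integration.integral_sum[symmetric])
         (intro integrable_mult_left integrable_mult_right kern_int, auto)
    finally have eq: "(\<Sum>k\<in>{1..n-1}. real (n choose (k+1)) * lam \<Lambda> n (k+1) * (real k * real (n-k))) = integral\<^sup>L \<Lambda> G" .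
    have GF: "G x = Fs n x / x^2" for x unfolding G_def Fs_def
      by (simp add: sum_divide_distrib) (intro sum.cong, auto simp: algebra_simps)
    have "integral\<^sup>L \<Lambda> (\<lambda>x. c0 * real n^2 * indicator {\<delta>..1-\<delta>} x) \<le> integral\<^sup>L \<Lambda> G"
    proof (rule integral_mono_AE)
      show "integrable \<Lambda> (\<lambda>x. c0 * real n^2 * indicator {\<delta>..1-\<delta>} x)"
        by (intro integrable_mult_right intb[where C=1]) (auto simp: indicator_def)
      show "integrable \<Lambda> G" by (rule Gint)
      show "AE x in \<Lambda>. c0 * real n^2 * indicator {\<delta>..1-\<delta>} x \<le> G x"
        using ae01 by eventually_elim (use Fs_pointwise[OF \<delta> n _ _ c0 N0] GF in auto)
    qed
    moreover have "integral\<^sup>L \<Lambda> (\<lambda>x. c0 * real n^2 * indicator {\<delta>..1-\<delta>} x) = c0 * real n^2 * measure \<Lambda> {\<delta>..1-\<delta>}"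
      using space_L by simp
    ultimately show "(\<Sum>k\<in>{1..n-1}. real (n choose (k+1)) * lam \<Lambda> n (k+1) * (real k * real (n-k))) \<ge> c * real n^2"
      unfolding eq c_def using space_L by (simp add: algebra_simps)
  qed
  then show ?thesis using cpos by blast
qed


lemma delta_exists:
  assumes nonzero: "emeasure \<Lambda> UNIV \<noteq> 0"
    and supp: "emeasure \<Lambda> (- {0..1}) = 0"
    and no_atom0: "emeasure \<Lambda> {0} = 0"
    and no_atom1: "emeasure \<Lambda> {1} = 0"
  shows "\<exists>\<delta>. 0 < \<delta> \<and> \<delta> \<le> 1/2 \<and> measure \<Lambda> {\<delta>..1-\<delta>} > 0"
proof (rule ccontr)
  assume neg: "\<not> ?thesis"
  define A where "A m = {1/(real m+2) .. 1 - 1/(real m+2)}" for m :: nat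
  have sA: "A m \<in> sets \<Lambda>" for m using sets_L by (simp add: A_def)
  have A0: "emeasure \<Lambda> (A m) = 0" for m
  proof -
    have d: "0 < 1/(real m+2)" "1/(real m+2) \<le> 1/2" by (auto simp: field_simps)
    then have "\<not> measure \<Lambda> (A m) > 0" using neg unfolding A_def by blast
    then have "measure \<Lambda> (A m) = 0" using measure_nonneg[of \<Lambda> "A m"] by linarith
    then show ?thesis using finite_measure.emeasure_eq_measure[OF fin, of "A m"] by simp
  qed
  have inc: "incseq A"
  proof (rule incseq_SucI)
    fix m
    have "1/(real (Suc m)+2) \<le> 1/(real m+2)" by (simp add: frac_le)
    then show "A m \<subseteq> A (Suc m)" unfolding A_def by auto
  qed
  have U: "(\<Union>m. A m) = {0<..<1}"
  proof
    show "(\<Union>m. A m) \<subseteq> {0<..<1}"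
    proof
      fix x assume "x \<in> (\<Union>m. A m)"
      then obtain m where xm: "x \<in> A m" by auto
      have p: "0 < 1/(real m+2)" by simp
      from xm have "1/(real m+2) \<le> x" "x \<le> 1 - 1/(real m+2)" unfolding A_def by auto
      with p show "x \<in> {0<..<1}" unfolding greaterThanLessThan_iff mem_Collect_eq by linarith
    qed
    show "{0<..<1} \<subseteq> (\<Union>m. A m)"
    proof
      fix x :: real assume x: "x \<in> {0<..<1}"
      define e where "e = min x (1-x)"
      have e: "e > 0" using x by (simp add: e_def)
      obtain m where m: "1/e \<le> real m" using real_arch_simple by blast
      have "1/(real m+2) \<le> e"
      proof -
        have "1/e < real m + 2" using m by linarith
        then show ?thesis using e by (simp add: field_simps)
      qed
      then have "x \<in> A m" unfolding A_def e_def by auto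
      then show "x \<in> (\<Union>m. A m)" by auto
    qed
  qed
  have "emeasure \<Lambda> {0<..<1::real} = (SUP m. emeasure \<Lambda> (A m))"
  proof -
    have "range A \<subseteq> sets \<Lambda>" using sA by auto
    from SUP_emeasure_incseq[OF this inc] U show ?thesis by simp
  qed
  also have "\<dots> = 0" using A0 by simp
  finally have E0: "emeasure \<Lambda> {0<..<1::real} = 0" .
  have "UNIV = ({0<..<1} \<union> - {0..1}) \<union> ({0} \<union> {1::real})" by auto
  then have "emeasure \<Lambda> UNIV = emeasure \<Lambda> (({0<..<1} \<union> - {0..1}) \<union> ({0} \<union> {1::real}))" by simp
  also have "\<dots> \<le> emeasure \<Lambda> ({0<..<1} \<union> - {0..1}) + emeasure \<Lambda> ({0} \<union> {1::real})"
    using sets_L by (intro emeasure_subadditive) auto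
  also have "emeasure \<Lambda> ({0<..<1} \<union> - {0..1}) \<le> emeasure \<Lambda> {0<..<1::real} + emeasure \<Lambda> (- {0..1::real})"
    using sets_L by (intro emeasure_subadditive) auto
  also have "emeasure \<Lambda> ({0} \<union> {1::real}) \<le> emeasure \<Lambda> {0::real} + emeasure \<Lambda> {1::real}"
    using sets_L by (intro emeasure_subadditive) auto
  finally have "emeasure \<Lambda> UNIV \<le> 0" using E0 supp no_atom0 no_atom1 by (simp add: add_mono)
  then show False using nonzero by simp
qed


lemma J_bound:
  fixes x :: real
  assumes r: "r \<ge> 2" and x: "0 < x" "x \<le> 1"
  shows "0 \<le> (2*real i*x)^r * (1-x)^(i-r) / x^2" "(2*real i*x)^r * (1-x)^(i-r) / x^2 \<le> (2*real i)^r"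
proof -
  have e: "(2*real i*x)^r * (1-x)^(i-r) / x^2 = (2*real i)^r * (x^r * (1-x)^(i-r) / x^2)"
    by (simp add: power_mult_distrib)
  show "0 \<le> (2*real i*x)^r * (1-x)^(i-r) / x^2" using x by simp
  have "x^r * (1-x)^(i-r) / x^2 \<le> 1" using kern_bound(2)[OF r x, of i] by simp
  then have "(2*real i)^r * (x^r * (1-x)^(i-r) / x^2) \<le> (2*real i)^r * 1"
    by (intro mult_left_mono) auto
  then show "(2*real i*x)^r * (1-x)^(i-r) / x^2 \<le> (2*real i)^r" unfolding e by simp
qed

lemma J_int: "r \<ge> 2 \<Longrightarrow> integrable \<Lambda> (\<lambda>x. (2*real i*x)^r * (1-x)^(i-r) / x^2)"
  by (rule intb[where C="(2*real i)^r"]) (use J_bound in auto)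

lemma W_lower:
  fixes \<phi> :: "real \<Rightarrow> real"
  assumes pos: "\<And>x. x > 0 \<Longrightarrow> \<phi> x > 0" and r: "r \<ge> 2"
    and i: "1 \<le> i" "i \<le> n" "n \<le> 2*i"
  shows "real (n choose r) * lam \<Lambda> n r * \<phi> (real n) / real n
     \<le> Max ((\<lambda>n. \<phi> (real n)) ` {i..2*i}) / real i * (\<integral>x. (2*real i*x)^r * (1-x)^(i-r) / x^2 \<partial>\<Lambda>)"
proof -
  define \<Phi> where "\<Phi> = Max ((\<lambda>n. \<phi> (real n)) ` {i..2*i})"
  have ph: "\<phi> (real n) \<le> \<Phi>" unfolding \<Phi>_def using Phi_facts(2)[OF pos i(1)] i by auto
  have phn: "\<phi> (real n) > 0" using pos i by simp
  have "real (n choose r) * lam \<Lambda> n r = (\<integral>x. real (n choose r) * (x^r * (1-x)^(n-r) / x^2) \<partial>\<Lambda>)"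
    unfolding lam_def by (simp only: integral_mult_right_zero)
  also have "\<dots> \<le> (\<integral>x. (2*real i*x)^r * (1-x)^(i-r) / x^2 \<partial>\<Lambda>)"
  proof (rule integral_mono_AE)
    show "integrable \<Lambda> (\<lambda>x. real (n choose r) * (x^r * (1-x)^(n-r) / x^2))"
      using kern_int[OF r] by (rule integrable_mult_right)
    show "integrable \<Lambda> (\<lambda>x. (2*real i*x)^r * (1-x)^(i-r) / x^2)" by (rule J_int[OF r])
    show "AE x in \<Lambda>. real (n choose r) * (x^r * (1-x)^(n-r) / x^2) \<le> (2*real i*x)^r * (1-x)^(i-r) / x^2"
      using ae01
    proof eventually_elim
      case (elim x)
      have c: "real (n choose r) \<le> (2*real i)^r"
      proof (cases "r \<le> n")
        case True
        have "n choose r \<le> n^r" by (rule binomial_le_pow[OF True])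
        then have "real (n choose r) \<le> real n ^ r" by (metis of_nat_le_iff of_nat_power)
        also have "\<dots> \<le> (2*real i)^r" using i by (intro power_mono) auto
        finally show ?thesis .
      next
        case False then have z: "n choose r = 0" by simp
        show ?thesis unfolding z by simp
      qed
      have p: "(1-x)^(n-r) \<le> (1-x)^(i-r)" using elim i by (intro power_decreasing) auto
      have "real (n choose r) * (x^r * (1-x)^(n-r) / x^2) = real (n choose r) * (1-x)^(n-r) * (x^r / x^2)" by simp
      also have "\<dots> \<le> (2*real i)^r * (1-x)^(i-r) * (x^r / x^2)"
        using c p elim by (intro mult_right_mono mult_mono) auto
      also have "\<dots> = (2*real i*x)^r * (1-x)^(i-r) / x^2" by (simp add: power_mult_distrib)
      finally show ?case .
    qed
  qed
  finally have q: "real (n choose r) * lam \<Lambda> n r \<le> (\<integral>x. (2*real i*x)^r * (1-x)^(i-r) / x^2 \<partial>\<Lambda>)" .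
  have q0: "0 \<le> real (n choose r) * lam \<Lambda> n r" using lam_nonneg[OF r] by simp
  have f: "\<phi> (real n) / real n \<le> \<Phi> / real i"
    using ph phn i by (intro frac_le) auto
  have "real (n choose r) * lam \<Lambda> n r * \<phi> (real n) / real n = (\<phi> (real n) / real n) * (real (n choose r) * lam \<Lambda> n r)" by simp
  also have "\<dots> \<le> (\<Phi> / real i) * (\<integral>x. (2*real i*x)^r * (1-x)^(i-r) / x^2 \<partial>\<Lambda>)"
    using f q q0 phn i ph by (intro mult_mono) auto
  finally show ?thesis unfolding \<Phi>_def .
qed


lemma W_sum:
  fixes \<phi> :: "real \<Rightarrow> real"
  assumes r: "r \<ge> 2"
    and Gb: "\<And>x N. 0 < x \<Longrightarrow> x \<le> 1 \<Longrightarrow> (\<Sum>i<N. Max ((\<lambda>n. \<phi> (real n)) ` {i..2*i}) / real i * (2*real i*x)^r * (1-x)^(i-r)) \<le> A * \<phi> (1/x) + B"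
    and i\<phi>: "integrable \<Lambda> (\<lambda>x. \<phi> (1/x) / x^2)" and i2: "integrable \<Lambda> (\<lambda>x. 1 / x^2)"
  shows "(\<Sum>i<N. Max ((\<lambda>n. \<phi> (real n)) ` {i..2*i}) / real i * (\<integral>x. (2*real i*x)^r * (1-x)^(i-r) / x^2 \<partial>\<Lambda>))
         \<le> A * (\<integral>x. \<phi> (1/x) / x^2 \<partial>\<Lambda>) + B * (\<integral>x. 1 / x^2 \<partial>\<Lambda>)"
proof -
  define c where "c i = Max ((\<lambda>n. \<phi> (real n)) ` {i..2*i}) / real i" for i
  have "(\<Sum>i<N. c i * (\<integral>x. (2*real i*x)^r * (1-x)^(i-r) / x^2 \<partial>\<Lambda>))
      = (\<Sum>i<N. (\<integral>x. c i * ((2*real i*x)^r * (1-x)^(i-r) / x^2) \<partial>\<Lambda>))"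
    by (intro sum.cong refl) (simp only: integral_mult_right_zero)
  also have "\<dots> = (\<integral>x. (\<Sum>i<N. c i * ((2*real i*x)^r * (1-x)^(i-r) / x^2)) \<partial>\<Lambda>)"
    by (rule Bochner_Integration.integral_sum[symmetric]) (intro integrable_mult_right J_int[OF r])
  also have "\<dots> \<le> (\<integral>x. A * (\<phi> (1/x) / x^2) + B * (1 / x^2) \<partial>\<Lambda>)"
  proof (rule integral_mono_AE)
    show "integrable \<Lambda> (\<lambda>x. \<Sum>i<N. c i * ((2*real i*x)^r * (1-x)^(i-r) / x^2))"
      by (intro Bochner_Integration.integrable_sum integrable_mult_right J_int[OF r])
    show "integrable \<Lambda> (\<lambda>x. A * (\<phi> (1/x) / x^2) + B * (1 / x^2))"
      using i\<phi> i2 by (intro Bochner_Integration.integrable_add integrable_mult_right)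
    show "AE x in \<Lambda>. (\<Sum>i<N. c i * ((2*real i*x)^r * (1-x)^(i-r) / x^2)) \<le> A * (\<phi> (1/x) / x^2) + B * (1 / x^2)"
      using ae01
    proof eventually_elim
      case (elim x)
      have x2: "x^2 > 0" using elim by simp
      have "(\<Sum>i<N. c i * ((2*real i*x)^r * (1-x)^(i-r) / x^2)) = (\<Sum>i<N. c i * (2*real i*x)^r * (1-x)^(i-r)) / x^2"
        by (simp add: sum_divide_distrib mult.assoc)
      also have "\<dots> \<le> (A * \<phi> (1/x) + B) / x^2"
        using Gb[of x N] elim x2 unfolding c_def by (intro divide_right_mono) auto
      also have "\<dots> = A * (\<phi> (1/x) / x^2) + B * (1 / x^2)" by (simp add: add_divide_distrib)
      finally show ?case .
    qed
  qed
  also have "\<dots> = A * (\<integral>x. \<phi> (1/x) / x^2 \<partial>\<Lambda>) + B * (\<integral>x. 1 / x^2 \<partial>\<Lambda>)"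
    using i\<phi> i2 by (subst Bochner_Integration.integral_add) (auto simp only: integral_mult_right_zero intro: integrable_mult_right)
  finally show ?thesis unfolding c_def .
qed

end



lemma lam_total_reindex:
  assumes n: "n \<ge> 2"
  shows "lam_total \<Lambda> n = (\<Sum>k\<in>{1..n-1}. real (n choose (k+1)) * lam \<Lambda> n (k+1))"
proof -
  have "lam_total \<Lambda> n = (\<Sum>k\<in>{Suc 1..Suc (n-1)}. real (n choose k) * lam \<Lambda> n k)"
    unfolding lam_total_def using n by (simp add: Suc_diff_1 numeral_2_eq_2)
  also have "\<dots> = (\<Sum>k\<in>{1..n-1}. real (n choose Suc k) * lam \<Lambda> n (Suc k))"
    by (rule sum.shift_bounds_cl_Suc_ivl)
  finally show ?thesis by simp
qed

lemma count_bound: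
  fixes w :: "nat \<Rightarrow> real"
  assumes k: "1 \<le> k" "k \<le> n - 1" and w0: "\<And>i. w i \<ge> 0" and v: "v \<ge> 0"
    and wv: "\<And>i. 1 \<le> i \<Longrightarrow> i \<le> n \<Longrightarrow> n \<le> 2*i \<Longrightarrow> v \<le> w i"
  shows "(\<Sum>i\<in>{n-k+1..n}. w i) \<ge> (real k * real (n-k) / real n) * v"
proof -
  define m where "m = max (n-k+1) ((n+1) div 2)"
  have nk: "n \<ge> 2" using k by simp
  have "(\<Sum>i\<in>{m..n}. w i) \<le> (\<Sum>i\<in>{n-k+1..n}. w i)"
    by (rule sum_mono2) (auto simp: m_def w0)
  moreover have "(\<Sum>i\<in>{m..n}. v) \<le> (\<Sum>i\<in>{m..n}. w i)"
  proof (rule sum_mono)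
    fix i assume i: "i \<in> {m..n}"
    show "v \<le> w i" using i k by (intro wv) (auto simp: m_def)
  qed
  moreover have "(\<Sum>i\<in>{m..n}. v) = real (n + 1 - m) * v" by simp
  moreover have "real k * real (n-k) / real n \<le> real (n + 1 - m)"
  proof -
    have npos: "real n > 0" using nk by simp
    have "real k * real (n-k) \<le> real (n + 1 - m) * real n"
    proof (cases "n - k + 1 \<ge> (n+1) div 2")
      case True
      then have "m = n - k + 1" by (simp add: m_def)
      then have "n + 1 - m = k" using k by simp
      then show ?thesis using k by (simp add: mult_left_mono)
    next
      case False
      then have "m = (n+1) div 2" by (simp add: m_def)
      moreover have "2 * ((n+1) div 2) \<le> n + 1" by simp
      ultimately have "2 * real (n + 1 - m) \<ge> real n" by linarith
      moreover have "4 * (real k * real (n-k)) \<le> real n * real n"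
      proof -
        have "real n * real n - 4 * (real k * real (n-k)) = (real n - 2 * real k)^2"
          using k by (simp add: of_nat_diff power2_eq_square algebra_simps)
        then show ?thesis by (smt (verit) zero_le_power2)
      qed
      ultimately have "real n * real n \<le> 2 * real (n + 1 - m) * real n" and "4 * (real k * real (n-k)) \<le> real n * real n"
        using npos by (auto intro: mult_right_mono)
      moreover have "0 \<le> real (n + 1 - m) * real n" by simp
      ultimately show ?thesis by linarith
    qed
    then show ?thesis using npos by (simp add: divide_le_eq)
  qed
  ultimately show ?thesis using v by (smt (verit) mult_right_mono)
qed

lemma b_diff:
  fixes w :: "nat \<Rightarrow> real"
  assumes k: "1 \<le> k" "k \<le> n - 1"
  shows "(\<Sum>i\<in>{1..n}. w i) - (\<Sum>i\<in>{1..n-k}. w i) = (\<Sum>i\<in>{n-k+1..n}. w i)"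
proof -
  have "{1..n} = {1..n-k} \<union> {n-k+1..n}" using k by auto
  then have "(\<Sum>i\<in>{1..n}. w i) = (\<Sum>i\<in>{1..n-k}. w i) + (\<Sum>i\<in>{n-k+1..n}. w i)"
    by (simp add: sum.union_disjoint[symmetric] ivl_disj_int_two)
  then show ?thesis by simp
qed


theorem lemma2:
  fixes \<Lambda> :: "real measure" and \<phi> :: "real \<Rightarrow> real" and a :: "nat \<Rightarrow> real" and l :: nat
  assumes sets_L: "sets \<Lambda> = sets borel"
    and fin: "finite_measure \<Lambda>"
    and nonzero: "emeasure \<Lambda> UNIV \<noteq> 0"
    and supp: "emeasure \<Lambda> (- {0..1}) = 0"
    and no_atom0: "emeasure \<Lambda> {0} = 0"
    and no_atom1: "emeasure \<Lambda> {1} = 0"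
    and m2: "(\<integral>\<^sup>+ x. ennreal (1 / x ^ 2) \<partial>\<Lambda>) < \<infinity>"
    and l_pos: "l \<ge> 1"
    and sv: "slowly_varying \<phi>"
    and int_phi: "(\<integral>\<^sup>+ y. ennreal (\<phi> (1 / y) / y ^ 2) \<partial>\<Lambda>) < \<infinity>"
    and init: "\<And>n. 1 \<le> n \<Longrightarrow> n \<le> l \<Longrightarrow> a n = 0"
    and rec: "\<And>n. n > l \<Longrightarrow>
               a n = p_coal \<Lambda> n l * \<phi> (real n) + (\<Sum>k=1..n-1. p_coal \<Lambda> n k * a (n - k))"
  shows "\<exists>C. \<forall>n\<ge>1. \<bar>a n\<bar> \<le> C"
proof -
  define r where "r = Suc l"
  have r2: "r \<ge> 2" using l_pos by (simp add: r_def)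
  have pos: "\<And>x. x > 0 \<Longrightarrow> \<phi> x > 0" using sv unfolding slowly_varying_def by auto
  have phim[measurable]: "\<phi> \<in> borel_measurable borel" using sv unfolding slowly_varying_def by auto
  have ae01: "AE x in \<Lambda>. 0 < x \<and> x \<le> 1"
  proof (rule AE_I')
    show "- {0..1} \<union> {0} \<in> null_sets \<Lambda>"
      using supp no_atom0 sets_L by (intro null_sets.Un) (auto simp: null_sets_def)
    show "{x \<in> space \<Lambda>. \<not> (0 < x \<and> x \<le> 1)} \<subseteq> - {0..1} \<union> {0::real}" by auto
  qed
  interpret lset \<Lambda> by (rule lset.intro[OF sets_L fin ae01])
  obtain \<delta> where \<delta>: "0 < \<delta>" "\<delta> \<le> 1/2" "measure \<Lambda> {\<delta>..1-\<delta>} > 0"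
    using delta_exists[OF nonzero supp no_atom0 no_atom1] by blast
  obtain c where c: "c > 0"
    and cE: "\<And>n. n \<ge> 2 \<Longrightarrow> (\<Sum>k\<in>{1..n-1}. real (n choose (k+1)) * lam \<Lambda> n (k+1) * (real k * real (n-k))) \<ge> c * real n^2"
    using E_bound[OF \<delta>] by blast
  obtain X where X: "X > 0" and pot: "\<And>y z. y \<ge> X \<Longrightarrow> z \<ge> X \<Longrightarrow> \<phi> y \<le> 2 * max (y/z) (z/y) * \<phi> z"
    using potter[OF sv] by blast
  define X1 where "X1 = max X 2"
  have pot1: "\<And>y z. y \<ge> X1 \<Longrightarrow> z \<ge> X1 \<Longrightarrow> \<phi> y \<le> 2 * max (y/z) (z/y) * \<phi> z"
    using pot unfolding X1_def by auto
  obtain A B where AB: "\<And>x N. 0 < x \<Longrightarrow> x \<le> 1 \<Longrightarrow>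
     (\<Sum>i<N. Max ((\<lambda>n. \<phi> (real n)) ` {i..2*i}) / real i * (2*real i*x)^r * (1-x)^(i-r)) \<le> A * \<phi> (1/x) + B"
    using G_bound[OF pos pot1 _ r2, of X1] unfolding X1_def by auto
  have i\<phi>: "integrable \<Lambda> (\<lambda>x. \<phi> (1/x) / x^2)"
  proof (rule integrableI_nonneg)
    show "(\<lambda>x. \<phi> (1/x) / x^2) \<in> borel_measurable \<Lambda>" by (rule meas_L) measurable
    show "AE x in \<Lambda>. 0 \<le> \<phi> (1/x) / x^2" using ae01 by eventually_elim (use pos in \<open>auto intro: less_imp_le\<close>)
    show "(\<integral>\<^sup>+ x. ennreal (\<phi> (1/x) / x^2) \<partial>\<Lambda>) < \<infinity>" using int_phi .
  qed
  have i2: "integrable \<Lambda> (\<lambda>x. 1 / x^2)"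
  proof (rule integrableI_nonneg)
    show "(\<lambda>x. 1 / x^2) \<in> borel_measurable \<Lambda>" by (rule meas_L) measurable
    show "AE x in \<Lambda>. 0 \<le> 1 / (x::real)^2" by simp
    show "(\<integral>\<^sup>+ x. ennreal (1 / x^2) \<partial>\<Lambda>) < \<infinity>" using m2 .
  qed
  define S where "S = A * (\<integral>x. \<phi> (1/x) / x^2 \<partial>\<Lambda>) + B * (\<integral>x. 1 / x^2 \<partial>\<Lambda>)"
  define w where "w i = Max ((\<lambda>n. \<phi> (real n)) ` {i..2*i}) / real i * (\<integral>x. (2*real i*x)^r * (1-x)^(i-r) / x^2 \<partial>\<Lambda>)" for i
  have wS: "(\<Sum>i<N. w i) \<le> S" for N
    unfolding w_def S_def by (rule W_sum[OF r2 AB i\<phi> i2])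
  have w0: "w i \<ge> 0" for i
  proof (cases "i = 0")
    case True then show ?thesis by (simp add: w_def)
  next
    case False
    have "Max ((\<lambda>n. \<phi> (real n)) ` {i..2*i}) \<ge> 0" using Phi_facts(1)[OF pos, where i=i] False by simp
    moreover have "(\<integral>x. (2*real i*x)^r * (1-x)^(i-r) / x^2 \<partial>\<Lambda>) \<ge> 0"
    proof -
      have "AE x in \<Lambda>. 0 \<le> (2*real i*x)^r * (1-x)^(i-r) / x^2"
        using ae01 by eventually_elim (use J_bound(1)[OF r2] in auto)
      then show ?thesis by (rule integral_nonneg_AE)
    qed
    ultimately show ?thesis unfolding w_def by simp
  qed
  define K where "K = 1 / c"
  define b where "b m = K * (\<Sum>i\<in>{1..m}. w i)" for m
  have Kpos: "K > 0" using c by (simp add: K_def)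
  have b0: "b m \<ge> 0" for m unfolding b_def using Kpos w0 by (simp add: sum_nonneg)
  have bS: "b m \<le> K * S" for m
  proof -
    have "(\<Sum>i\<in>{1..m}. w i) \<le> (\<Sum>i<Suc m. w i)" by (rule sum_mono2) (auto simp: w0)
    also have "\<dots> \<le> S" by (rule wS)
    finally show ?thesis unfolding b_def using Kpos by simp
  qed
  define q where "q n k = real (n choose k) * lam \<Lambda> n k" for n k
  have q0: "q n k \<ge> 0" if "k \<ge> 2" for n k unfolding q_def using lam_nonneg[OF that] by simp
  define \<psi> where "\<psi> n = q n r * \<phi> (real n)" for n
  have \<psi>0: "\<psi> n \<ge> 0" if "n \<ge> 1" for n unfolding \<psi>_def using q0[OF r2] pos[of "real n"] that by simp
  have cE': "(\<Sum>k\<in>{1..n-1}. q n (k+1) * (real k * real (n-k))) \<ge> c * real n^2" if "n \<ge> 2" for n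
    using cE[OF that] unfolding q_def .
  \<comment> \<open>the supersolution inequality\<close>
  have super: "(\<Sum>k\<in>{1..n-1}. q n (k+1) * (b n - b (n-k))) \<ge> \<psi> n" if n: "n \<ge> r" for n
  proof -
    have n2: "n \<ge> 2" using n r2 by simp
    have npos: "real n > 0" using n2 by simp
    have diff: "b n - b (n-k) \<ge> K * ((real k * real (n-k) / real n) * (\<psi> n / real n))" if k: "k \<in> {1..n-1}" for k
    proof -
      have e: "b n - b (n-k) = K * (\<Sum>i\<in>{n-k+1..n}. w i)"
        unfolding b_def using b_diff[of k n w] k by (simp add: right_diff_distrib[symmetric])
      have h: "(\<Sum>i\<in>{n-k+1..n}. w i) \<ge> (real k * real (n-k) / real n) * (\<psi> n / real n)"
      proof (rule count_bound)
        show "1 \<le> k" "k \<le> n - 1" using k by auto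
        show "\<And>i. 0 \<le> w i" by (rule w0)
        show "0 \<le> \<psi> n / real n" using \<psi>0[of n] n2 by simp
        fix i assume i: "1 \<le> i" "i \<le> n" "n \<le> 2*i"
        show "\<psi> n / real n \<le> w i" unfolding \<psi>_def q_def w_def
          by (rule W_lower[OF pos r2 i])
      qed
      show ?thesis unfolding e using h Kpos by (intro mult_left_mono) auto
    qed
    have "(\<Sum>k\<in>{1..n-1}. q n (k+1) * (b n - b (n-k)))
        \<ge> (\<Sum>k\<in>{1..n-1}. q n (k+1) * (K * ((real k * real (n-k) / real n) * (\<psi> n / real n))))"
      using diff q0 by (intro sum_mono mult_left_mono) auto
    moreover have "(\<Sum>k\<in>{1..n-1}. q n (k+1) * (K * ((real k * real (n-k) / real n) * (\<psi> n / real n))))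
        = K * \<psi> n / real n^2 * (\<Sum>k\<in>{1..n-1}. q n (k+1) * (real k * real (n-k)))"
      by (simp add: sum_distrib_left power2_eq_square algebra_simps)
    moreover have "K * \<psi> n / real n^2 * (\<Sum>k\<in>{1..n-1}. q n (k+1) * (real k * real (n-k)))
        \<ge> K * \<psi> n / real n^2 * (c * real n^2)"
      using cE'[OF n2] Kpos \<psi>0[of n] n2 by (intro mult_left_mono) auto
    moreover have "K * \<psi> n / real n^2 * (c * real n^2) = \<psi> n"
      using npos c by (simp add: K_def field_simps)
    ultimately show ?thesis by linarith
  qed
  have lam_pos: "lam_total \<Lambda> n > 0" and lam_eq: "lam_total \<Lambda> n = (\<Sum>k\<in>{1..n-1}. q n (k+1))" if n2: "n \<ge> 2" for n
  proof -
    show leq: "lam_total \<Lambda> n = (\<Sum>k\<in>{1..n-1}. q n (k+1))"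
      unfolding q_def by (rule lam_total_reindex[OF n2])
    have npos: "real n > 0" using n2 by simp
    have "(\<Sum>k\<in>{1..n-1}. q n (k+1) * (real k * real (n-k))) \<le> (\<Sum>k\<in>{1..n-1}. q n (k+1) * real n^2)"
    proof (rule sum_mono)
      fix k assume k: "k \<in> {1..n-1}"
      have "real k * real (n-k) \<le> real n * real n" using k by (intro mult_mono) auto
      then show "q n (k+1) * (real k * real (n-k)) \<le> q n (k+1) * real n^2"
        using q0[of "k+1" n] k by (intro mult_left_mono) (auto simp: power2_eq_square)
    qed
    also have "\<dots> = (\<Sum>k\<in>{1..n-1}. q n (k+1)) * real n^2" by (simp add: sum_distrib_right)
    finally have "c * real n^2 \<le> (\<Sum>k\<in>{1..n-1}. q n (k+1)) * real n^2" using cE'[OF n2] by linarith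
    then have "c \<le> (\<Sum>k\<in>{1..n-1}. q n (k+1))" using npos by simp
    then show "lam_total \<Lambda> n > 0" using c leq by linarith
  qed
  have cmp: "1 \<le> n \<longrightarrow> 0 \<le> a n \<and> a n \<le> b n" for n
  proof (induction n rule: less_induct)
    case (less n)
    show ?case
    proof
      assume n1: "1 \<le> n"
      show "0 \<le> a n \<and> a n \<le> b n"
      proof (cases "n \<le> l")
        case True
        then show ?thesis using init[OF n1 True] b0 by simp
      next
        case False
        then have nl: "n > l" by simp
        have nr: "n \<ge> r" using nl by (simp add: r_def)
        have n2: "n \<ge> 2" using nr r2 by simp
        define L where "L = lam_total \<Lambda> n"
        have Lpos: "L > 0" using lam_pos[OF n2] by (simp add: L_def)
        have IH: "0 \<le> a (n-k) \<and> a (n-k) \<le> b (n-k)" if k: "k \<in> {1..n-1}" for k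
          using less.IH[of "n-k"] k by auto
        have pc: "p_coal \<Lambda> n k = q n (k+1) / L" for k
          unfolding p_coal_def q_def L_def by simp
        have "a n = q n r / L * \<phi> (real n) + (\<Sum>k\<in>{1..n-1}. q n (k+1) / L * a (n-k))"
          using rec[OF nl] unfolding pc by (simp add: r_def)
        then have aL: "L * a n = \<psi> n + (\<Sum>k\<in>{1..n-1}. q n (k+1) * a (n-k))"
          using Lpos unfolding \<psi>_def by (simp add: field_simps sum_distrib_left sum_divide_distrib)
        have s1: "(\<Sum>k\<in>{1..n-1}. q n (k+1) * a (n-k)) \<le> (\<Sum>k\<in>{1..n-1}. q n (k+1) * b (n-k))"
          using IH q0 by (intro sum_mono mult_left_mono) auto
        have s0: "0 \<le> (\<Sum>k\<in>{1..n-1}. q n (k+1) * a (n-k))"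
          using IH q0 by (intro sum_nonneg mult_nonneg_nonneg) auto
        have "(\<Sum>k\<in>{1..n-1}. q n (k+1) * (b n - b (n-k)))
            = L * b n - (\<Sum>k\<in>{1..n-1}. q n (k+1) * b (n-k))"
          unfolding L_def lam_eq[OF n2] by (simp add: right_diff_distrib sum_subtractf sum_distrib_right)
        with super[OF nr] aL s1 have "L * a n \<le> L * b n" by linarith
        then have "a n \<le> b n" using Lpos by simp
        moreover have "0 \<le> L * a n" using aL s0 \<psi>0[OF n1] by linarith
        then have "0 \<le> a n" using Lpos by (simp add: zero_le_mult_iff)
        ultimately show ?thesis by simp
      qed
    qed
  qed
  show ?thesis
  proof (intro exI[of _ "K * S"] allI impI)
    fix n :: nat assume "1 \<le> n"
    with cmp[of n] bS[of n] show "\<bar>a n\<bar> \<le> K * S" by simp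
  qed
qed


end
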